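(* Let $P\in\mathcal{P}$, suppose $\nu:\mathcal{P}\to\mathcal{H}$ is pathwise differentiable at $P$, and let $\beta=(\beta_k)_{k\ge1}\in\ell^2\cap[0,1]^{\mathbb{N}}$. Define $r_P^\beta(h)(z)=\sum_{k=1}^\infty\beta_k\langle h,h_k\rangle_{\mathcal{H}}\dot{\nu}_P^*(h_k)(z)$. Then there is a set $\mathcal{Z}^\beta$ of $P$-probability one such that for every $z\in\mathcal{Z}^\beta$, $r_P^\beta(\cdot)(z):\mathcal{H}\to\mathbb{R}$ is a bounded linear functional with Riesz representation $$\phi_P^\beta(z)=\sum_{k=1}^\infty\beta_k\dot{\nu}_P^*(h_k)(z)h_k.$$ Moreover, $\sigma_P(\beta):=\|\phi_P^\beta\|_{L^2(P;\mathcal{H})}=\big[\sum_{k=1}^\infty\beta_k^2P\{\dot{\nu}_P^*(h_k)^2\}\big]^{1/2}\le\|\dot{\nu}_P^*\|_{\mathrm{op}}\|\beta\|_{\ell^2}<\infty$.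
   Context: Let $(\mathcal{Z},\mathbf{B})$ be a Polish space and $\mathcal{P}$ a model of probability distributions on it dominated by a $\sigma$-finite measure $\lambda$. For $P\in\mathcal{P}$ and $s\in L^2(P)$, $\mathscr{P}(P,\mathcal{P},s)$ is the set of submodels $\{P_\epsilon:\epsilon\in[0,\delta)\}\subset\mathcal{P}$ with $\|p_\epsilon^{1/2}-p^{1/2}-\epsilon s p^{1/2}/2\|_{L^2(\lambda)}=o(\epsilon)$ ($p_\epsilon,p$ the $\lambda$-densities). The tangent set is $\{s:\mathscr{P}(P,\mathcal{P},s)\ne\emptyset\}$, the tangent space $\dot{\mathcal{P}}_P$ its closed linear span in $L^2(P)$. $\mathcal{H}$ is a real separable Hilbert space with orthonormal basis $(h_k)_{k\ge1}$ (if $\dim\mathcal{H}<\infty$, an orthonormal basis padded with zero vectors). $\nu$ is pathwise differentiable at $P$ if there is a continuous linear $\dot{\nu}_P:\dot{\mathcal{P}}_P\to\mathcal{H}$ with $\|\nu(P_\epsilon)-\nu(P)-\epsilon\dot{\nu}_P(s)\|_{\mathcal{H}}=o(\epsilon)$ for every $s$ in the tangent set and every submodel in $\mathscr{P}(P,\mathcal{P},s)$; $\dot{\nu}_P^*:\mathcal{H}\to\dot{\mathcal{P}}_P$ is its adjoint (efficient influence operator), with $\|\cdot\|_{\mathrm{op}}$ the operator norm. For a function $f$, $Pf=\int f\,dP$. $L^2(P;\mathcal{H})$ denotes Bochner measurable $f:\mathcal{Z}\to\mathcal{H}$ with $\int\|f\|_{\mathcal{H}}^2dP<\infty$, with that norm.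 *)

theory Defs
  imports "HOL-Probability.Probability"
begin

definition L2fun :: "'z measure \<Rightarrow> ('z \<Rightarrow> real) set" where
  "L2fun M = {s. s \<in> borel_measurable M \<and> integrable M (\<lambda>z. (s z)\<^sup>2)}"

definition L2norm :: "'z measure \<Rightarrow> ('z \<Rightarrow> real) \<Rightarrow> real" where
  "L2norm M s = sqrt (\<integral>z. (s z)\<^sup>2 \<partial>M)"

definition dominated_model :: "'z::polish_space measure \<Rightarrow> 'z measure set \<Rightarrow> bool" where
  "dominated_model lam PP \<longleftrightarrow> sigma_finite_measure lam \<and> sets lam = sets borel \<and>
     (\<forall>Q\<in>PP. prob_space Q \<and> sets Q = sets borel \<and> absolutely_continuous lam Q)"

text \<open>Hellinger-differentiable submodels through P with score s:
  a family Pe e, e in [0,delta), contained in the model, with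
  norm_{L2(lam)}(sqrt p_e - sqrt p - e s sqrt p / 2) = o(e) as e -> 0+,
  where densities are the Radon-Nikodym derivatives w.r.t. lam.\<close>
definition submodels ::
  "'z::polish_space measure \<Rightarrow> 'z measure \<Rightarrow> 'z measure set \<Rightarrow> ('z \<Rightarrow> real)
     \<Rightarrow> (real \<times> (real \<Rightarrow> 'z measure)) set" where
  "submodels lam P PP s = {(\<delta>, Pe). \<delta> > 0 \<and> (\<forall>e\<in>{0..<\<delta>}. Pe e \<in> PP) \<and>
     (\<forall>c>0. eventually (\<lambda>e.
        (\<integral>\<^sup>+ z. ennreal ((sqrt (enn2real (RN_deriv lam (Pe e) z))
                          - sqrt (enn2real (RN_deriv lam P z))
                          - e * s z * sqrt (enn2real (RN_deriv lam P z)) / 2)\<^sup>2) \<partial>lam)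
        \<le> ennreal ((c * e)\<^sup>2)) (at_right 0))}"

definition tangent_set :: "'z::polish_space measure \<Rightarrow> 'z measure \<Rightarrow> 'z measure set \<Rightarrow> ('z \<Rightarrow> real) set" where
  "tangent_set lam P PP = {s \<in> L2fun P. submodels lam P PP s \<noteq> {}}"

definition fun_span :: "('z \<Rightarrow> real) set \<Rightarrow> ('z \<Rightarrow> real) set" where
  "fun_span T = {t. \<exists>F c. finite F \<and> F \<subseteq> T \<and> t = (\<lambda>z. \<Sum>f\<in>F. c f * f z)}"

definition tangent_space :: "'z::polish_space measure \<Rightarrow> 'z measure \<Rightarrow> 'z measure set \<Rightarrow> ('z \<Rightarrow> real) set" where
  "tangent_space lam P PP = {s \<in> L2fun P. \<forall>\<epsilon>>0. \<exists>t\<in>fun_span (tangent_set lam P PP).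
       L2norm P (\<lambda>z. s z - t z) < \<epsilon>}"

text \<open>Orthonormal basis of H indexed by nat, padded with zeros if dim H is finite.\<close>
definition padded_onb :: "(nat \<Rightarrow> 'h::{real_inner,complete_space}) \<Rightarrow> bool" where
  "padded_onb hb \<longleftrightarrow>
     (\<forall>j k. j \<noteq> k \<longrightarrow> inner (hb j) (hb k) = 0) \<and>
     ((\<forall>k. norm (hb k) = 1) \<or> (\<exists>n. (\<forall>k<n. norm (hb k) = 1) \<and> (\<forall>k\<ge>n. hb k = 0))) \<and>
     closure (span (range hb)) = UNIV"

definition pathwise_diff ::
  "'z::polish_space measure \<Rightarrow> 'z measure set \<Rightarrow> ('z measure \<Rightarrow> 'h::{real_inner,complete_space})
     \<Rightarrow> 'z measure \<Rightarrow> (('z \<Rightarrow> real) \<Rightarrow> 'h) \<Rightarrow> bool" where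
  "pathwise_diff lam PP \<nu> P nud \<longleftrightarrow>
     (\<forall>s\<in>tangent_space lam P PP. \<forall>t\<in>tangent_space lam P PP. \<forall>a b.
        nud (\<lambda>z. a * s z + b * t z) = a *\<^sub>R nud s + b *\<^sub>R nud t) \<and>
     (\<exists>K. \<forall>s\<in>tangent_space lam P PP. norm (nud s) \<le> K * L2norm P s) \<and>
     (\<forall>s\<in>tangent_set lam P PP. \<forall>(\<delta>, Pe)\<in>submodels lam P PP s. \<forall>c>0.
        eventually (\<lambda>e. norm (\<nu> (Pe e) - \<nu> P - e *\<^sub>R nud s) \<le> c * e) (at_right 0))"

definition is_adjoint ::
  "'z::polish_space measure \<Rightarrow> 'z measure \<Rightarrow> 'z measure set \<Rightarrow> (('z \<Rightarrow> real) \<Rightarrow> 'h::{real_inner,complete_space})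
     \<Rightarrow> ('h \<Rightarrow> 'z \<Rightarrow> real) \<Rightarrow> bool" where
  "is_adjoint lam P PP nud nus \<longleftrightarrow>
     (\<forall>h. nus h \<in> tangent_space lam P PP) \<and>
     (\<forall>s\<in>tangent_space lam P PP. \<forall>h. inner (nud s) h = (\<integral>z. s z * nus h z \<partial>P))"

definition op_norm_L2 :: "'z measure \<Rightarrow> ('h::real_normed_vector \<Rightarrow> 'z \<Rightarrow> real) \<Rightarrow> real" where
  "op_norm_L2 P T = (SUP h\<in>{h. norm h \<le> 1}. L2norm P (T h))"

end

theory Submission
  imports Defs begin

lemma orth_series:
  fixes hb :: "nat \<Rightarrow> 'h::{real_inner,complete_space}" and c :: "nat \<Rightarrow> real"
  assumes orth: "\<forall>j k. j \<noteq> k \<longrightarrow> inner (hb j) (hb k) = 0"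
    and nb: "\<forall>k. norm (hb k) \<le> 1"
    and sc: "summable (\<lambda>k. (c k)\<^sup>2)"
  shows "summable (\<lambda>k. c k *\<^sub>R hb k)"
    and "\<And>h. (\<lambda>k. c k * inner h (hb k)) sums inner h (\<Sum>k. c k *\<^sub>R hb k)"
    and "(\<lambda>k. (c k)\<^sup>2 * (norm (hb k))\<^sup>2) sums (norm (\<Sum>k. c k *\<^sub>R hb k))\<^sup>2"
proof -
  have pyth: "(norm (sum (\<lambda>k. c k *\<^sub>R hb k) {m..<n}))\<^sup>2 \<le> sum (\<lambda>k. (c k)\<^sup>2) {m..<n}" for m n
  proof -
    have "(norm (sum (\<lambda>k. c k *\<^sub>R hb k) {m..<n}))\<^sup>2 = (\<Sum>k\<in>{m..<n}. (norm (c k *\<^sub>R hb k))\<^sup>2)"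
      by (rule norm_sum_Pythagorean) (auto simp: pairwise_def orthogonal_def orth)
    also have "\<dots> \<le> sum (\<lambda>k. (c k)\<^sup>2) {m..<n}"
    proof (rule sum_mono)
      fix k
      have "(norm (c k *\<^sub>R hb k))\<^sup>2 = (c k)\<^sup>2 * (norm (hb k))\<^sup>2"
        by (simp add: power_mult_distrib)
      also have "\<dots> \<le> (c k)\<^sup>2 * 1"
        using nb by (intro mult_left_mono) (auto simp: power_le_one)
      finally show "(norm (c k *\<^sub>R hb k))\<^sup>2 \<le> (c k)\<^sup>2" by simp
    qed
    finally show ?thesis .
  qed
  show sv: "summable (\<lambda>k. c k *\<^sub>R hb k)"
    unfolding summable_iff_convergent
  proof (rule Cauchy_convergent, rule metric_CauchyI)
    fix e :: real assume e: "e > 0"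
    from sc[unfolded summable_Cauchy] e obtain N where
      N: "\<forall>m\<ge>N. \<forall>n. norm (sum (\<lambda>k. (c k)\<^sup>2) {m..<n}) < e\<^sup>2"
      by (meson zero_less_power)
    show "\<exists>M. \<forall>m\<ge>M. \<forall>n\<ge>M. dist (sum (\<lambda>k. c k *\<^sub>R hb k) {..<m}) (sum (\<lambda>k. c k *\<^sub>R hb k) {..<n}) < e"
    proof (intro exI allI impI)
      fix m n assume m: "m \<ge> N" and n: "n \<ge> N"
      have key: "norm (sum (\<lambda>k. c k *\<^sub>R hb k) {a..<b}) < e" if "a \<ge> N" for a b
      proof -
        have "(norm (sum (\<lambda>k. c k *\<^sub>R hb k) {a..<b}))\<^sup>2 < e\<^sup>2"
        proof -
          have "norm (sum (\<lambda>k. (c k)\<^sup>2) {a..<b}) < e\<^sup>2" using N that by blast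
          then have "sum (\<lambda>k. (c k)\<^sup>2) {a..<b} < e\<^sup>2" by simp
          then show ?thesis using pyth[of a b] by linarith
        qed
        thus ?thesis using e by (meson abs_le_square_iff abs_of_pos not_le order.strict_iff_order
              power2_less_imp_less)
      qed
      show "dist (sum (\<lambda>k. c k *\<^sub>R hb k) {..<m}) (sum (\<lambda>k. c k *\<^sub>R hb k) {..<n}) < e"
      proof (cases "m \<le> n")
        case True
        have "sum (\<lambda>k. c k *\<^sub>R hb k) {..<n} = sum (\<lambda>k. c k *\<^sub>R hb k) {..<m} + sum (\<lambda>k. c k *\<^sub>R hb k) {m..<n}"
          using True by (metis sum.atLeastLessThan_concat lessThan_atLeast0 zero_le)
        then show ?thesis using key[OF m, of n] by (simp add: dist_norm norm_minus_commute)
      next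
        case False
        have "sum (\<lambda>k. c k *\<^sub>R hb k) {..<m} = sum (\<lambda>k. c k *\<^sub>R hb k) {..<n} + sum (\<lambda>k. c k *\<^sub>R hb k) {n..<m}"
          using False by (metis sum.atLeastLessThan_concat lessThan_atLeast0 zero_le nat_le_linear)
        then show ?thesis using key[OF n, of m] by (simp add: dist_norm)
      qed
    qed
  qed
  have inn: "(\<lambda>k. c k * inner h (hb k)) sums inner h (\<Sum>k. c k *\<^sub>R hb k)" for h
  proof -
    have "(\<lambda>k. inner h (c k *\<^sub>R hb k)) sums inner h (\<Sum>k. c k *\<^sub>R hb k)"
      using bounded_linear.summable[OF bounded_linear_inner_right sv]
        bounded_linear.suminf[OF bounded_linear_inner_right sv]
      by (metis summable_sums)
    thus ?thesis by (simp add: mult.commute)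
  qed
  show "\<And>h. (\<lambda>k. c k * inner h (hb k)) sums inner h (\<Sum>k. c k *\<^sub>R hb k)" by (rule inn)
  have hk: "inner (hb j) (\<Sum>k. c k *\<^sub>R hb k) = c j * (norm (hb j))\<^sup>2" for j
  proof -
    have "(\<lambda>k. c k * inner (hb j) (hb k)) = (\<lambda>k. if k = j then c j * (norm (hb j))\<^sup>2 else 0)"
      using orth by (auto simp: power2_norm_eq_inner)
    with inn[of "hb j"] sums_single[of j "\<lambda>_. c j * (norm (hb j))\<^sup>2"] show ?thesis
      using sums_unique2 by metis
  qed
  have "(\<lambda>k. c k * inner (hb k) (\<Sum>k. c k *\<^sub>R hb k)) sums inner (\<Sum>k. c k *\<^sub>R hb k) (\<Sum>k. c k *\<^sub>R hb k)"
    using inn[of "\<Sum>k. c k *\<^sub>R hb k"] by (simp add: inner_commute)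
  then show "(\<lambda>k. (c k)\<^sup>2 * (norm (hb k))\<^sup>2) sums (norm (\<Sum>k. c k *\<^sub>R hb k))\<^sup>2"
    by (simp add: hk power2_norm_eq_inner[symmetric] power2_eq_square mult.assoc)
qed
theorem lemma1:
  fixes lam P :: "'z::polish_space measure"
    and PP :: "'z measure set"
    and \<nu> :: "'z measure \<Rightarrow> 'h::{real_inner,complete_space}"
    and nud :: "('z \<Rightarrow> real) \<Rightarrow> 'h"
    and nus :: "'h \<Rightarrow> 'z \<Rightarrow> real"
    and hb :: "nat \<Rightarrow> 'h"
    and \<beta> :: "nat \<Rightarrow> real"
  assumes model: "dominated_model lam PP"
    and P_in: "P \<in> PP"
    and basis: "padded_onb hb"
    and diff: "pathwise_diff lam PP \<nu> P nud"
    and adj: "is_adjoint lam P PP nud nus"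
    and beta_l2: "summable (\<lambda>k. (\<beta> k)\<^sup>2)"
    and beta_01: "\<forall>k. 0 \<le> \<beta> k \<and> \<beta> k \<le> 1"
  shows "\<exists>Z\<beta>. Z\<beta> \<in> sets P \<and> prob_space.prob P Z\<beta> = 1 \<and>
    (\<forall>z\<in>Z\<beta>.
       (\<forall>h. summable (\<lambda>k. \<beta> k * inner h (hb k) * nus (hb k) z)) \<and>
       bounded_linear (\<lambda>h. \<Sum>k. \<beta> k * inner h (hb k) * nus (hb k) z) \<and>
       summable (\<lambda>k. (\<beta> k * nus (hb k) z) *\<^sub>R hb k) \<and>
       (\<forall>h. (\<Sum>k. \<beta> k * inner h (hb k) * nus (hb k) z)
              = inner h (\<Sum>k. (\<beta> k * nus (hb k) z) *\<^sub>R hb k))) \<and>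
    (let \<phi> = (\<lambda>z. indicator Z\<beta> z *\<^sub>R (\<Sum>k. (\<beta> k * nus (hb k) z) *\<^sub>R hb k)) in
       \<phi> \<in> borel_measurable P \<and>
       integrable P (\<lambda>z. (norm (\<phi> z))\<^sup>2) \<and>
       bdd_above ((\<lambda>h. L2norm P (nus h)) ` {h. norm h \<le> 1}) \<and>
       summable (\<lambda>k. (\<beta> k)\<^sup>2 * (\<integral>z. (nus (hb k) z)\<^sup>2 \<partial>P)) \<and>
       sqrt (\<integral>z. (norm (\<phi> z))\<^sup>2 \<partial>P)
         = sqrt (\<Sum>k. (\<beta> k)\<^sup>2 * (\<integral>z. (nus (hb k) z)\<^sup>2 \<partial>P)) \<and>
       sqrt (\<integral>z. (norm (\<phi> z))\<^sup>2 \<partial>P) \<le> op_norm_L2 P nus * sqrt (\<Sum>k. (\<beta> k)\<^sup>2))"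
proof -
  have Pin: "prob_space P \<and> sets P = sets borel"
    using model P_in unfolding dominated_model_def by blast
  then interpret prob_space P by blast
  have setsP: "sets P = sets borel" using Pin by blast
  have spP: "space P = UNIV" using sets_eq_imp_space_eq[OF setsP] by simp
  have L2: "nus h \<in> borel_measurable P \<and> integrable P (\<lambda>z. (nus h z)\<^sup>2)" for h
    using adj unfolding is_adjoint_def tangent_space_def L2fun_def by blast
  have nusm[measurable]: "nus h \<in> borel_measurable P" for h using L2 by blast
  have nusi: "integrable P (\<lambda>z. (nus h z)\<^sup>2)" for h using L2 by blast
  obtain K where K: "\<forall>s\<in>tangent_space lam P PP. norm (nud s) \<le> K * L2norm P s"
    using diff unfolding pathwise_diff_def by blast
  define K' where "K' = max K 0"
  have K'0: "K' \<ge> 0" unfolding K'_def by simp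
  have adjI: "(\<integral>z. (nus h z)\<^sup>2 \<partial>P) = inner (nud (nus h)) h" for h
    using adj unfolding is_adjoint_def by (simp add: power2_eq_square)
  have L2b: "L2norm P (nus h) \<le> K' * norm h" for h
  proof -
    define x where "x = L2norm P (nus h)"
    have I0: "(\<integral>z. (nus h z)\<^sup>2 \<partial>P) \<ge> 0" by simp
    have xx: "x\<^sup>2 = (\<integral>z. (nus h z)\<^sup>2 \<partial>P)" unfolding x_def L2norm_def using I0 by simp
    have x0: "x \<ge> 0" unfolding x_def L2norm_def by simp
    have "x\<^sup>2 \<le> norm (nud (nus h)) * norm h"
      unfolding xx adjI by (rule norm_cauchy_schwarz)
    also have "\<dots> \<le> (K * x) * norm h"
      using K adj unfolding is_adjoint_def x_def by (intro mult_right_mono) auto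
    also have "\<dots> \<le> (K' * x) * norm h"
      unfolding K'_def using x0 by (intro mult_right_mono) (auto intro: mult_right_mono)
    finally have "x * x \<le> x * (K' * norm h)" by (simp add: power2_eq_square mult_ac)
    then have "x \<le> K' * norm h" if "x > 0" using that by simp
    then show ?thesis using x0 K'0 unfolding x_def[symmetric]
      by (cases "x > 0") (auto)
  qed
  have Izero: "(\<integral>z. (nus 0 z)\<^sup>2 \<partial>P) = 0" unfolding adjI by simp
  have nb: "norm (hb k) = 1 \<or> hb k = 0" for k
    using basis unfolding padded_onb_def by (metis not_le)
  have nb1: "\<forall>k. norm (hb k) \<le> 1" using nb by (metis order.refl norm_zero zero_le_one)
  have orth: "\<forall>j k. j \<noteq> k \<longrightarrow> inner (hb j) (hb k) = 0" using basis unfolding padded_onb_def by blast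
  define Ik where "Ik k = (\<integral>z. (nus (hb k) z)\<^sup>2 \<partial>P)" for k
  have Ik0: "Ik k \<ge> 0" for k unfolding Ik_def by simp
  have IkL: "Ik k = (L2norm P (nus (hb k)))\<^sup>2" for k unfolding Ik_def L2norm_def by simp
  have Ikb: "Ik k \<le> K'\<^sup>2" for k
  proof -
    have "L2norm P (nus (hb k)) \<le> K' * 1"
      using L2b[of "hb k"] nb1 K'0 by (meson mult_left_mono order.trans)
    moreover have "L2norm P (nus (hb k)) \<ge> 0" unfolding L2norm_def by simp
    ultimately show ?thesis unfolding IkL by (simp add: power_mono)
  qed
  have Iknorm: "(norm (hb k))\<^sup>2 * Ik k = Ik k" for k
    using nb[of k] Izero unfolding Ik_def by auto
  have sumB: "summable (\<lambda>k. (\<beta> k)\<^sup>2 * Ik k)"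
  proof (rule summable_comparison_test[OF _ summable_mult2[OF beta_l2, of "K'\<^sup>2"]])
    show "\<exists>N. \<forall>n\<ge>N. norm ((\<beta> n)\<^sup>2 * Ik n) \<le> (\<beta> n)\<^sup>2 * K'\<^sup>2"
      using Ik0 Ikb by (auto intro!: mult_left_mono)
  qed
  define c where "c z k = \<beta> k * nus (hb k) z" for z k
  have cm[measurable]: "(\<lambda>z. c z k) \<in> borel_measurable P" for k unfolding c_def by measurable
  have ci: "integrable P (\<lambda>z. (c z k)\<^sup>2)" for k
    unfolding c_def power_mult_distrib by (intro integrable_mult_right nusi)
  have cint: "(\<integral>z. (c z k)\<^sup>2 \<partial>P) = (\<beta> k)\<^sup>2 * Ik k" for k
    unfolding c_def power_mult_distrib Ik_def by simp
  define g where "g z = (\<Sum>k. ennreal ((c z k)\<^sup>2))" for z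
  have gm[measurable]: "g \<in> borel_measurable P" unfolding g_def by measurable
  have "integral\<^sup>N P g = (\<Sum>k. integral\<^sup>N P (\<lambda>z. ennreal ((c z k)\<^sup>2)))"
    unfolding g_def by (rule nn_integral_suminf) measurable
  also have "\<dots> = (\<Sum>k. ennreal ((\<beta> k)\<^sup>2 * Ik k))"
    using nn_integral_eq_integral[OF ci] cint by simp
  also have "\<dots> = ennreal (\<Sum>k. (\<beta> k)\<^sup>2 * Ik k)"
    using sumB Ik0 by (intro suminf_ennreal2) auto
  finally have gfin: "integral\<^sup>N P g \<noteq> \<infinity>" by simp
  define Z where "Z = {z \<in> space P. g z \<noteq> \<top>}"
  have Zm[measurable]: "Z \<in> sets P" unfolding Z_def by measurable
  have AEZ: "AE z in P. g z \<noteq> \<top>" using nn_integral_PInf_AE[OF gm gfin] by simp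
  have probZ: "prob Z = 1"
    using prob_Collect_eq_1[of "\<lambda>z. g z \<noteq> \<top>"] Zm AEZ unfolding Z_def by simp
  have csum: "summable (\<lambda>k. (c z k)\<^sup>2)" if "z \<in> Z" for z
    using that unfolding Z_def g_def by (intro summable_suminf_not_top) auto
  define S where "S z = (\<Sum>k. c z k *\<^sub>R hb k)" for z
  have pt: "\<forall>h. summable (\<lambda>k. \<beta> k * inner h (hb k) * nus (hb k) z) \<and>
       (\<Sum>k. \<beta> k * inner h (hb k) * nus (hb k) z) = inner h (S z)" if "z \<in> Z" for z
  proof
    fix h
    have "(\<lambda>k. c z k * inner h (hb k)) sums inner h (S z)"
      unfolding S_def by (rule orth_series(2)[OF orth nb1 csum[OF that]])
    moreover have "(\<lambda>k. c z k * inner h (hb k)) = (\<lambda>k. \<beta> k * inner h (hb k) * nus (hb k) z)"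
      unfolding c_def by (simp add: mult_ac)
    ultimately show "summable (\<lambda>k. \<beta> k * inner h (hb k) * nus (hb k) z) \<and>
       (\<Sum>k. \<beta> k * inner h (hb k) * nus (hb k) z) = inner h (S z)"
      by (metis sums_summable sums_unique)
  qed
  have part1: "\<forall>z\<in>Z.
       (\<forall>h. summable (\<lambda>k. \<beta> k * inner h (hb k) * nus (hb k) z)) \<and>
       bounded_linear (\<lambda>h. \<Sum>k. \<beta> k * inner h (hb k) * nus (hb k) z) \<and>
       summable (\<lambda>k. (\<beta> k * nus (hb k) z) *\<^sub>R hb k) \<and>
       (\<forall>h. (\<Sum>k. \<beta> k * inner h (hb k) * nus (hb k) z)
              = inner h (\<Sum>k. (\<beta> k * nus (hb k) z) *\<^sub>R hb k))"
  proof
    fix z assume z: "z \<in> Z"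
    have "(\<lambda>h. \<Sum>k. \<beta> k * inner h (hb k) * nus (hb k) z) = (\<lambda>h. inner h (S z))"
      using pt[OF z] by auto
    then show "(\<forall>h. summable (\<lambda>k. \<beta> k * inner h (hb k) * nus (hb k) z)) \<and>
       bounded_linear (\<lambda>h. \<Sum>k. \<beta> k * inner h (hb k) * nus (hb k) z) \<and>
       summable (\<lambda>k. (\<beta> k * nus (hb k) z) *\<^sub>R hb k) \<and>
       (\<forall>h. (\<Sum>k. \<beta> k * inner h (hb k) * nus (hb k) z)
              = inner h (\<Sum>k. (\<beta> k * nus (hb k) z) *\<^sub>R hb k))"
      using pt[OF z] orth_series(1)[OF orth nb1 csum[OF z]] bounded_linear_inner_left[of "S z"]
      unfolding S_def c_def by auto
  qed
  define \<phi> where "\<phi> z = indicator Z z *\<^sub>R S z" for z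
  have \<phi>m[measurable]: "\<phi> \<in> borel_measurable P"
  proof (rule borel_measurable_LIMSEQ_metric)
    show "(\<lambda>z. indicator Z z *\<^sub>R (\<Sum>k<n. c z k *\<^sub>R hb k)) \<in> borel_measurable P" for n
    proof -
      define C where "C z = (\<lambda>k. indicator Z z * c z k)" for z
      have Cm: "C \<in> borel_measurable P" unfolding C_def
        by (rule measurable_coordinatewise_then_product) measurable
      have Gm: "(\<lambda>x::nat\<Rightarrow>real. \<Sum>k<n. x k *\<^sub>R hb k) \<in> borel_measurable borel"
        by (intro borel_measurable_continuous_onI continuous_intros continuous_on_product_coordinates)
      have "(\<lambda>z. indicator Z z *\<^sub>R (\<Sum>k<n. c z k *\<^sub>R hb k)) = (\<lambda>x. \<Sum>k<n. x k *\<^sub>R hb k) \<circ> C"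
        unfolding C_def by (auto simp: scaleR_sum_right fun_eq_iff)
      then show ?thesis using measurable_comp[OF Cm Gm] by simp
    qed
    fix z assume "z \<in> space P"
    show "(\<lambda>n. indicator Z z *\<^sub>R (\<Sum>k<n. c z k *\<^sub>R hb k)) \<longlonglongrightarrow> \<phi> z"
    proof (cases "z \<in> Z")
      case True
      then show ?thesis unfolding \<phi>_def S_def
        using summable_LIMSEQ[OF orth_series(1)[OF orth nb1 csum[OF True]]]
        by (simp add: indicator_def)
    next
      case False
      then show ?thesis unfolding \<phi>_def by simp
    qed
  qed
  define d where "d k z = (c z k)\<^sup>2 * (norm (hb k))\<^sup>2" for k z
  have dsum: "(\<lambda>k. d k z) sums (norm (S z))\<^sup>2" if "z \<in> Z" for z
    unfolding d_def S_def using orth_series(3)[OF orth nb1 csum[OF that]] by simp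
  have di: "integrable P (d k)" for k unfolding d_def by (intro integrable_mult_left ci)
  have dint: "(\<integral>z. d k z \<partial>P) = (\<beta> k)\<^sup>2 * Ik k" for k
  proof -
    have "(\<integral>z. d k z \<partial>P) = (norm (hb k))\<^sup>2 * (\<integral>z. (c z k)\<^sup>2 \<partial>P)"
      unfolding d_def by (simp add: mult_ac)
    also have "\<dots> = (\<beta> k)\<^sup>2 * ((norm (hb k))\<^sup>2 * Ik k)" unfolding cint by (simp add: mult_ac)
    finally show ?thesis unfolding Iknorm .
  qed
  have d0: "d k z \<ge> 0" for k z unfolding d_def by simp
  have AEeq: "AE z in P. (norm (\<phi> z))\<^sup>2 = (\<Sum>k. d k z)"
    using AEZ
  proof (rule AE_mp, intro AE_I2 impI)
    fix z assume "z \<in> space P" "g z \<noteq> \<top>"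
    then have z: "z \<in> Z" unfolding Z_def by simp
    show "(norm (\<phi> z))\<^sup>2 = (\<Sum>k. d k z)" using dsum[OF z] z unfolding \<phi>_def
      by (simp add: sums_unique)
  qed
  have AEs: "AE z in P. summable (\<lambda>k. norm (d k z))"
    using AEZ
  proof (rule AE_mp, intro AE_I2 impI)
    fix z assume "z \<in> space P" "g z \<noteq> \<top>"
    then have z: "z \<in> Z" unfolding Z_def by simp
    show "summable (\<lambda>k. norm (d k z))" using dsum[OF z] d0 by (simp add: sums_summable)
  qed
  have sI: "summable (\<lambda>k. \<integral>z. norm (d k z) \<partial>P)"
    using sumB d0 dint by simp
  have intD: "integrable P (\<lambda>z. \<Sum>k. d k z)" by (rule integrable_suminf[OF di AEs sI])
  have intPhi: "integrable P (\<lambda>z. (norm (\<phi> z))\<^sup>2)"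
  proof -
    have m1: "(\<lambda>z. (norm (\<phi> z))\<^sup>2) \<in> borel_measurable P"
    proof -
      have "(\<lambda>x::'h. (norm x)\<^sup>2) \<in> borel_measurable borel"
        by (intro borel_measurable_continuous_onI continuous_intros)
      from measurable_compose[OF \<phi>m this] show ?thesis .
    qed
    have m2: "(\<lambda>z. \<Sum>k. d k z) \<in> borel_measurable P"
      using intD by blast
    show ?thesis using integrable_cong_AE[OF m1 m2 AEeq] intD by simp
  qed
  have eqI: "(\<integral>z. (norm (\<phi> z))\<^sup>2 \<partial>P) = (\<Sum>k. (\<beta> k)\<^sup>2 * Ik k)"
  proof -
    have "(\<integral>z. (norm (\<phi> z))\<^sup>2 \<partial>P) = (\<integral>z. (\<Sum>k. d k z) \<partial>P)"
      by (rule integral_cong_AE[OF _ _ AEeq]) (use intPhi intD in blast)+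
    also have "\<dots> = (\<Sum>k. \<integral>z. d k z \<partial>P)" by (rule integral_suminf[OF di AEs sI])
    finally show ?thesis using dint by simp
  qed
  have bdd: "bdd_above ((\<lambda>h. L2norm P (nus h)) ` {h. norm h \<le> 1})"
  proof (rule bdd_aboveI2)
    fix h :: 'h assume "h \<in> {h. norm h \<le> 1}"
    then have "K' * norm h \<le> K' * 1" using K'0 by (intro mult_left_mono) auto
    then show "L2norm P (nus h) \<le> K'" using L2b[of h] by linarith
  qed
  define op where "op = op_norm_L2 P nus"
  have opub: "L2norm P (nus h) \<le> op" if "norm h \<le> 1" for h
    unfolding op_def op_norm_L2_def using that by (intro cSUP_upper[OF _ bdd]) auto
  have op0: "op \<ge> 0"
  proof -
    have "L2norm P (nus 0) \<ge> 0" unfolding L2norm_def by simp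
    moreover have "L2norm P (nus 0) \<le> op" by (rule opub) simp
    ultimately show ?thesis by linarith
  qed
  have "(\<Sum>k. (\<beta> k)\<^sup>2 * Ik k) \<le> (\<Sum>k. (\<beta> k)\<^sup>2 * op\<^sup>2)"
  proof (rule suminf_le[OF _ sumB summable_mult2[OF beta_l2]])
    fix k
    have "L2norm P (nus (hb k)) \<le> op" using opub nb1 by blast
    moreover have "L2norm P (nus (hb k)) \<ge> 0" unfolding L2norm_def by simp
    ultimately have "Ik k \<le> op\<^sup>2" unfolding IkL by (simp add: power_mono)
    then show "(\<beta> k)\<^sup>2 * Ik k \<le> (\<beta> k)\<^sup>2 * op\<^sup>2" by (simp add: mult_left_mono)
  qed
  also have "\<dots> = op\<^sup>2 * (\<Sum>k. (\<beta> k)\<^sup>2)" using suminf_mult2[OF beta_l2, of "op\<^sup>2"] by (simp add: mult_ac)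
  finally have "sqrt (\<Sum>k. (\<beta> k)\<^sup>2 * Ik k) \<le> sqrt (op\<^sup>2 * (\<Sum>k. (\<beta> k)\<^sup>2))" by simp
  also have "\<dots> = op * sqrt (\<Sum>k. (\<beta> k)\<^sup>2)" using op0 by (simp add: real_sqrt_mult)
  finally have ineq: "sqrt (\<Sum>k. (\<beta> k)\<^sup>2 * Ik k) \<le> op * sqrt (\<Sum>k. (\<beta> k)\<^sup>2)" .
  have \<phi>eq: "(\<lambda>z. indicator Z z *\<^sub>R (\<Sum>k. (\<beta> k * nus (hb k) z) *\<^sub>R hb k)) = \<phi>"
    unfolding \<phi>_def S_def c_def by simp
  have sq: "sqrt (\<integral>z. (norm (\<phi> z))\<^sup>2 \<partial>P) = sqrt (\<Sum>k. (\<beta> k)\<^sup>2 * (\<integral>z. (nus (hb k) z)\<^sup>2 \<partial>P))"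
    using eqI unfolding Ik_def by simp
  have ineq2: "sqrt (\<integral>z. (norm (\<phi> z))\<^sup>2 \<partial>P) \<le> op_norm_L2 P nus * sqrt (\<Sum>k. (\<beta> k)\<^sup>2)"
    using eqI ineq unfolding op_def by simp
  show ?thesis
    apply (rule exI[of _ Z])
    unfolding Let_def \<phi>eq
    using Zm probZ part1 \<phi>m intPhi bdd sumB[unfolded Ik_def] sq ineq2
    by blast
qed

end
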